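(* Let $\phi\in C^4(\mathbb{R})$ be a profile function of a graph-like forward self-similar solution to the planar surface diffusion flow, i.e. $$\frac{\phi(x_1) - x_1\phi'(x_1)}{4\,v(x_1)} = -\frac{1}{v}\frac{d}{dx_1}\Big(\frac{1}{v}\frac{dk}{dx_1}\Big)\quad\text{on }\mathbb{R},\qquad v=\sqrt{1+(\phi')^2},\ k=\phi''/v^3.$$ Assume $\phi$ is globally Lipschitz and $\phi' - a_0\in L^1(\mathbb{R})$ for some $a_0\in\mathbb{R}$. Then $\phi(x_1) = a_0 x_1$ for all $x_1\in\mathbb{R}$.
   Context: The displayed equation is the profile equation $\frac{x\cdot\mathbf{n}}{4}=-\partial_s^2 k$ for the graph $\Gamma_*=\{(x_1,\phi(x_1))\}$ with upward normal $\mathbf{n}=(-\phi',1)/v$, curvature $k$ and arc-length derivative $\partial_s=v^{-1}\partial_{x_1}$, so that $t^{1/4}\Gamma_*$ solves the surface diffusion flow $V=-\partial_s^2 k$. *)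

theory Defs
  imports "HOL-Analysis.Analysis"
begin

definition C_k :: "nat \<Rightarrow> (real \<Rightarrow> real) \<Rightarrow> bool" where
  "C_k m f \<longleftrightarrow>
     (\<forall>j<m. \<forall>x. ((deriv ^^ j) f has_real_derivative (deriv ^^ Suc j) f x) (at x))
     \<and> continuous_on UNIV ((deriv ^^ m) f)"

definition sd_v :: "(real \<Rightarrow> real) \<Rightarrow> real \<Rightarrow> real" where
  "sd_v f x = sqrt (1 + (deriv f x)\<^sup>2)"

definition sd_k :: "(real \<Rightarrow> real) \<Rightarrow> real \<Rightarrow> real" where
  "sd_k f x = deriv (deriv f) x / (sd_v f x) ^ 3"

definition sd_profile :: "(real \<Rightarrow> real) \<Rightarrow> bool" where
  "sd_profile f \<longleftrightarrow>
     (\<forall>x. (f x - x * deriv f x) / (4 * sd_v f x)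
          = - (1 / sd_v f x) * deriv (\<lambda>y. (1 / sd_v f y) * deriv (sd_k f) y) x)"

end

theory Submission
  imports Defs
begin

lemma lip_deriv_bound:
  fixes f :: "real \<Rightarrow> real"
  assumes "lipschitz_on L UNIV f" "(f has_real_derivative d) (at x)"
  shows "\<bar>d\<bar> \<le> L"
proof -
  have lim: "((\<lambda>y. (f y - f x) / (y - x)) \<longlongrightarrow> d) (at x)"
    using assms(2) by (simp add: DERIV_def has_field_derivative_iff)
  have "\<forall>\<^sub>F y in at x. norm ((f y - f x) / (y - x)) \<le> L"
  proof (rule always_eventually, rule allI)
    fix y
    have "dist (f y) (f x) \<le> L * dist y x" using assms(1) by (auto simp: lipschitz_on_def)
    then have "\<bar>f y - f x\<bar> \<le> L * \<bar>y - x\<bar>" by (simp add: dist_real_def)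
    then show "norm ((f y - f x) / (y - x)) \<le> L"
      by (cases "y = x") (auto simp: abs_divide divide_le_eq lipschitz_on_nonneg[OF assms(1)])
  qed
  then show ?thesis using tendsto_norm[OF lim]
    by (intro tendsto_upperbound) auto
qed

lemma cs_sqrt: "1 + a * t \<le> sqrt (1 + a\<^sup>2) * sqrt (1 + t\<^sup>2)"
proof -
  have "(1 + a*t)\<^sup>2 \<le> (1 + a\<^sup>2) * (1 + t\<^sup>2)"
  proof -
    have "(1 + a*t)\<^sup>2 + (a - t)\<^sup>2 = (1 + a\<^sup>2) * (1 + t\<^sup>2)" by (simp add: power2_eq_square algebra_simps)
    moreover have "0 \<le> (a - t)\<^sup>2" by simp
    ultimately show ?thesis by linarith
  qed
  then have "\<bar>1 + a*t\<bar> \<le> sqrt ((1 + a\<^sup>2) * (1 + t\<^sup>2))"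
    using real_le_rsqrt by (metis real_sqrt_abs real_sqrt_le_mono)
  then show ?thesis by (simp add: real_sqrt_mult)
qed

definition gq :: "real \<Rightarrow> real" where "gq t = t / sqrt (1 + t\<^sup>2)"

lemma sqrt1_deriv:
  assumes "(h has_real_derivative h') (at x)"
  shows "((\<lambda>y. sqrt (1 + (h y)\<^sup>2)) has_real_derivative h x * h' / sqrt (1 + (h x)\<^sup>2)) (at x)"
proof -
  have p: "0 < 1 + (h x)\<^sup>2" by (simp add: add_pos_nonneg)
  have a: "((\<lambda>y. 1 + (h y)\<^sup>2) has_real_derivative 2 * h x * h') (at x)"
    using assms by (auto intro!: derivative_eq_intros)
  have "((\<lambda>y. sqrt (1 + (h y)\<^sup>2)) has_real_derivative inverse (sqrt (1 + (h x)\<^sup>2)) / 2 * (2 * h x * h')) (at x)"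
    by (rule DERIV_chain2[OF DERIV_real_sqrt[OF p] a])
  then show ?thesis by (simp add: field_simps)
qed

lemma gq_deriv: "((\<lambda>t. t / sqrt (1 + t\<^sup>2)) has_real_derivative 1 / (sqrt (1 + t\<^sup>2) * (1 + t\<^sup>2))) (at t)"
proof -
  have p: "0 < 1 + t\<^sup>2" by (simp add: add_pos_nonneg)
  have s: "sqrt (1 + t\<^sup>2) * sqrt (1 + t\<^sup>2) = 1 + t\<^sup>2" using p by simp
  have "((\<lambda>t. t / sqrt (1 + t\<^sup>2)) has_real_derivative
     (1 * sqrt (1 + t\<^sup>2) - t * (t * 1 / sqrt (1 + t\<^sup>2))) / (sqrt (1 + t\<^sup>2) * sqrt (1 + t\<^sup>2))) (at t)"
    by (rule DERIV_divide[OF DERIV_ident sqrt1_deriv[OF DERIV_ident]]) (use p in simp)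
  moreover have "(1 * sqrt (1 + t\<^sup>2) - t * (t * 1 / sqrt (1 + t\<^sup>2))) / (sqrt (1 + t\<^sup>2) * sqrt (1 + t\<^sup>2))
     = 1 / (sqrt (1 + t\<^sup>2) * (1 + t\<^sup>2))"
    using p s by (simp add: field_simps power2_eq_square)
  ultimately show ?thesis by simp
qed

lemma gq_lip: "\<bar>t / sqrt (1 + t\<^sup>2) - a / sqrt (1 + a\<^sup>2)\<bar> \<le> \<bar>t - a\<bar>"
proof -
  have d0: "0 \<le> 1 / (sqrt (1 + t\<^sup>2) * (1 + t\<^sup>2))" for t :: real by simp
  have d1: "1 / (sqrt (1 + t\<^sup>2) * (1 + t\<^sup>2)) \<le> 1" for t :: real
  proof -
    have "1 \<le> sqrt (1 + t\<^sup>2)" by simp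
    moreover have "1 \<le> 1 + t\<^sup>2" by simp
    ultimately have "1 * 1 \<le> sqrt (1 + t\<^sup>2) * (1 + t\<^sup>2)"
      by (intro mult_mono) auto
    then show ?thesis by simp
  qed
  have main: "0 \<le> y / sqrt (1 + y\<^sup>2) - x / sqrt (1 + x\<^sup>2) \<and> y / sqrt (1 + y\<^sup>2) - x / sqrt (1 + x\<^sup>2) \<le> y - x"
    if xy: "x \<le> y" for x y :: real
  proof
    have "(\<lambda>t. t / sqrt (1 + t\<^sup>2)) x \<le> (\<lambda>t. t / sqrt (1 + t\<^sup>2)) y"
    proof (rule DERIV_nonneg_imp_nondecreasing[OF xy])
      fix z show "\<exists>d. ((\<lambda>t. t / sqrt (1 + t\<^sup>2)) has_real_derivative d) (at z) \<and> 0 \<le> d"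
        using gq_deriv[of z] d0[of z] by blast
    qed
    then show "0 \<le> y / sqrt (1 + y\<^sup>2) - x / sqrt (1 + x\<^sup>2)" by simp
    have "(\<lambda>t. t - t / sqrt (1 + t\<^sup>2)) x \<le> (\<lambda>t. t - t / sqrt (1 + t\<^sup>2)) y"
    proof (rule DERIV_nonneg_imp_nondecreasing[OF xy])
      fix z
      have "((\<lambda>t. t - t / sqrt (1 + t\<^sup>2)) has_real_derivative 1 - 1 / (sqrt (1 + z\<^sup>2) * (1 + z\<^sup>2))) (at z)"
        by (rule DERIV_diff[OF DERIV_ident gq_deriv[of z]])
      moreover have "0 \<le> 1 - 1 / (sqrt (1 + z\<^sup>2) * (1 + z\<^sup>2))" using d1[of z] by linarith
      ultimately show "\<exists>d. ((\<lambda>t. t - t / sqrt (1 + t\<^sup>2)) has_real_derivative d) (at z) \<and> 0 \<le> d"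
        by blast
    qed
    then show "y / sqrt (1 + y\<^sup>2) - x / sqrt (1 + x\<^sup>2) \<le> y - x" by simp
  qed
  show ?thesis
  proof (cases "a \<le> t")
    case True
    then show ?thesis using main[of a t] by (simp add: abs_le_iff)
  next
    case False
    then show ?thesis using main[of t a] by (simp add: abs_le_iff)
  qed
qed

lemma alg_q:
  fixes V F1 F2 P X :: real
  assumes "V > 0" "V\<^sup>2 = 1 + F1\<^sup>2"
  shows "((1 + (F1 * F1 + F2 * P)) * V - (X + P * F1) * (F1 * F2 / V)) / (V * V) = V + F2 / V ^ 3 * (P - X * F1)"
proof -
  have "((1 + (F1 * F1 + F2 * P)) * V - (X + P * F1) * (F1 * F2 / V)) / (V * V)
      = ((1 + F1\<^sup>2) * V\<^sup>2 + F2 * P * (V\<^sup>2 - F1\<^sup>2) - X * F1 * F2) / V ^ 3"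
    using assms(1) by (simp add: field_simps power2_eq_square eval_nat_numeral)
  also have "\<dots> = (V ^ 4 + F2 * P - X * F1 * F2) / V ^ 3"
    using assms(2) by (simp add: eval_nat_numeral power2_eq_square)
  also have "\<dots> = V + F2 / V ^ 3 * (P - X * F1)"
    using assms(1) by (simp add: field_simps eval_nat_numeral)
  finally show ?thesis .
qed

lemma ftc_real:
  fixes F f :: "real \<Rightarrow> real"
  assumes "a \<le> b" "\<And>x. (F has_real_derivative f x) (at x)"
  shows "(f has_integral (F b - F a)) {a..b}"
proof (rule fundamental_theorem_of_calculus[OF assms(1)])
  fix x assume "x \<in> {a..b}"
  show "(F has_vector_derivative f x) (at x within {a..b})"
    using assms(2)[of x] has_real_derivative_iff_has_vector_derivative has_vector_derivative_at_within by blast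
qed

lemma has_integral_abs_le:
  fixes h g :: "real \<Rightarrow> real"
  assumes "(h has_integral i) S" "(g has_integral j) S" "\<And>x. x \<in> S \<Longrightarrow> \<bar>h x\<bar> \<le> g x"
  shows "\<bar>i\<bar> \<le> j"
proof -
  have "i \<le> j" by (rule has_integral_le[OF assms(1,2)]) (use assms(3) in force)
  moreover have "-i \<le> j" by (rule has_integral_le[OF has_integral_neg[OF assms(1)] assms(2)]) (use assms(3) in force)
  ultimately show ?thesis by linarith
qed

lemma no_long:
  fixes f1 f2 :: "real \<Rightarrow> real"
  assumes d1: "\<And>x. (f1 has_real_derivative f2 x) (at x)"
    and c2: "continuous_on UNIV f2"
    and Lb: "\<And>x. \<bar>f1 x\<bar> \<le> L"
    and ab: "a \<le> b" "2 * L < b - a"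
    and big: "\<And>x. a \<le> x \<Longrightarrow> x \<le> b \<Longrightarrow> 1 \<le> \<bar>f2 x\<bar>"
  shows False
proof -
  have c: "continuous_on {a..y} f2" for y using c2 continuous_on_subset by blast
  have fa: "1 \<le> \<bar>f2 a\<bar>" using big[of a] ab by simp
  have b1: "\<bar>f1 b - f1 a\<bar> \<le> 2 * L" using Lb[of a] Lb[of b] by linarith
  show False
  proof (cases "f2 a \<ge> 1")
    case True
    have pos: "f2 y \<ge> 1" if ay: "a \<le> y" "y \<le> b" for y
    proof (rule ccontr)
      assume "\<not> f2 y \<ge> 1"
      then have "f2 y \<le> 0" using big[OF ay] by linarith
      then obtain z where "a \<le> z" "z \<le> y" "f2 z = 0"
        using IVT2'[where f=f2 and a=a and b=y and y=0, OF _ _ ay(1) c] True by auto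
      then show False using big[of z] ay by simp
    qed
    have "(\<lambda>t. f1 t - t) a \<le> (\<lambda>t. f1 t - t) b"
    proof (rule DERIV_nonneg_imp_nondecreasing[OF ab(1)])
      fix x assume "a \<le> x" "x \<le> b"
      then show "\<exists>y. ((\<lambda>t. f1 t - t) has_real_derivative y) (at x) \<and> 0 \<le> y"
        using DERIV_diff[OF d1[of x] DERIV_ident] pos[of x] by force
    qed
    then show False using b1 ab by simp
  next
    case False
    then have neg0: "f2 a \<le> -1" using fa by linarith
    have neg: "f2 y \<le> -1" if ay: "a \<le> y" "y \<le> b" for y
    proof (rule ccontr)
      assume "\<not> f2 y \<le> -1"
      then have "0 \<le> f2 y" using big[OF ay] by linarith
      then obtain z where "a \<le> z" "z \<le> y" "f2 z = 0"
        using IVT'[where f=f2 and a=a and b=y and y=0, OF _ _ ay(1) c] neg0 by auto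
      then show False using big[of z] ay by simp
    qed
    have "(\<lambda>t. f1 t + t) b \<le> (\<lambda>t. f1 t + t) a"
    proof (rule DERIV_nonpos_imp_nonincreasing[OF ab(1)])
      fix x assume "a \<le> x" "x \<le> b"
      then show "\<exists>y. ((\<lambda>t. f1 t + t) has_real_derivative y) (at x) \<and> y \<le> 0"
        using DERIV_add[OF d1[of x] DERIV_ident] neg[of x] by force
    qed
    then show False using b1 ab by simp
  qed
qed


lemma core:
  fixes \<phi> f1 f2 f3 :: "real \<Rightarrow> real" and a0 L :: real
  assumes d0: "\<And>x. (\<phi> has_real_derivative f1 x) (at x)"
  and d1: "\<And>x. (f1 has_real_derivative f2 x) (at x)"
  and d2: "\<And>x. (f2 has_real_derivative f3 x) (at x)"
  and dK0: "\<And>x. ((\<lambda>y. (f3 y / sqrt (1 + (f1 y)\<^sup>2) ^ 3 - 3 * f1 y * (f2 y)\<^sup>2 / sqrt (1 + (f1 y)\<^sup>2) ^ 5)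
                / sqrt (1 + (f1 y)\<^sup>2)) has_real_derivative - (\<phi> x - x * f1 x) / 4) (at x)"
  and Lb: "\<And>x. \<bar>f1 x\<bar> \<le> L"
  and int: "(\<lambda>x. \<bar>f1 x - a0\<bar>) integrable_on UNIV"
  shows "\<phi> x = x * f1 x"
proof -
  have L0: "0 \<le> L" using Lb[of 0] by linarith
  define v where "v = (\<lambda>y. sqrt (1 + (f1 y)\<^sup>2))"
  have vpos: "\<And>y. v y > 0" unfolding v_def by (simp add: add_pos_nonneg)
  have v1: "\<And>y. 1 \<le> v y" unfolding v_def by simp
  have hv: "\<And>y. (v y)\<^sup>2 = 1 + (f1 y)\<^sup>2" unfolding v_def by (simp add: add_nonneg_nonneg)
  define V where "V = sqrt (1 + L\<^sup>2)"
  have vV: "v y \<le> V" for y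
  proof -
    have "\<bar>f1 y\<bar> \<le> \<bar>L\<bar>" using Lb[of y] L0 by simp
    then have "(f1 y)\<^sup>2 \<le> L\<^sup>2" by (simp add: abs_le_square_iff)
    then show ?thesis unfolding v_def V_def by simp
  qed
  have dv: "\<And>x. (v has_real_derivative f1 x * f2 x / v x) (at x)"
    unfolding v_def by (rule sqrt1_deriv[OF d1])
  define kp where "kp = (\<lambda>y. f3 y / v y ^ 3 - 3 * f1 y * (f2 y)\<^sup>2 / v y ^ 5)"
  define k where "k = (\<lambda>y. f2 y / v y ^ 3)"
  have dk: "(k has_real_derivative kp x) (at x)" for x
  proof -
    have h: "((\<lambda>y. v y ^ 3) has_real_derivative 3 * v x ^ 2 * (f1 x * f2 x / v x)) (at x)"
      using DERIV_power[OF dv, of 3] by (simp add: algebra_simps)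
    have "(k has_real_derivative (f3 x * v x ^ 3 - f2 x * (3 * v x ^ 2 * (f1 x * f2 x / v x))) / (v x ^ 3 * v x ^ 3)) (at x)"
      unfolding k_def by (rule DERIV_divide[OF d2 h]) (use vpos[of x] in simp)
    moreover have "(f3 x * v x ^ 3 - f2 x * (3 * v x ^ 2 * (f1 x * f2 x / v x))) / (v x ^ 3 * v x ^ 3) = kp x"
      unfolding kp_def using vpos[of x] by (simp add: field_simps power2_eq_square eval_nat_numeral)
    ultimately show ?thesis by simp
  qed
  define K where "K = (\<lambda>y. kp y / v y)"
  have dK: "(K has_real_derivative - (\<phi> x - x * f1 x) / 4) (at x)" for x
    using dK0[of x] by (simp add: K_def kp_def v_def)
  define v0 where "v0 = sqrt (1 + a0\<^sup>2)"
  have v0pos: "v0 > 0" unfolding v0_def by (simp add: add_pos_nonneg)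
  have hv0: "v0\<^sup>2 = 1 + a0\<^sup>2" unfolding v0_def by (simp add: add_nonneg_nonneg)
  define g where "g = (\<lambda>x. \<bar>f1 x - a0\<bar>)"
  define I where "I = integral UNIV g"
  have g0: "\<And>x. 0 \<le> g x" unfolding g_def by simp
  have gint: "g integrable_on UNIV" using int unfolding g_def .
  have c1: "continuous_on UNIV f1"
    using DERIV_isCont[OF d1] by (simp add: continuous_at_imp_continuous_on)
  have c2: "continuous_on UNIV f2"
    using DERIV_isCont[OF d2] by (simp add: continuous_at_imp_continuous_on)
  have gc: "continuous_on UNIV g" unfolding g_def
    by (intro continuous_intros c1)
  have gab: "g integrable_on {a..b}" for a b
    by (rule integrable_continuous_interval) (use gc continuous_on_subset in blast)
  have gI: "integral {a..b} g \<le> I" for a b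
    unfolding I_def by (rule integral_subset_le[OF subset_UNIV gab gint]) (use g0 in blast)
  have gab0: "0 \<le> integral {a..b} g" for a b
    by (rule integral_nonneg[OF gab]) (use g0 in blast)
  have I0: "0 \<le> I" using gI[of 0 0] gab0[of 0 0] by linarith
  have dpsi: "((\<lambda>t. \<phi> t - a0 * t) has_real_derivative f1 x - a0) (at x)" for x
    using DERIV_diff[OF d0[of x] DERIV_cmult[OF DERIV_ident, of a0]] by simp
  have psi: "\<bar>\<phi> x - a0 * x - \<phi> 0\<bar> \<le> I" for x
  proof (cases "0 \<le> x")
    case True
    have "((\<lambda>t. f1 t - a0) has_integral ((\<phi> x - a0 * x) - (\<phi> 0 - a0 * 0))) {0..x}"
      by (rule ftc_real[OF True dpsi])
    then have "\<bar>(\<phi> x - a0 * x) - (\<phi> 0 - a0 * 0)\<bar> \<le> integral {0..x} g"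
      by (rule has_integral_abs_le[OF _ integrable_integral[OF gab]]) (simp add: g_def)
    then show ?thesis using gI[of 0 x] by simp
  next
    case False
    have "((\<lambda>t. f1 t - a0) has_integral ((\<phi> 0 - a0 * 0) - (\<phi> x - a0 * x))) {x..0}"
      by (rule ftc_real[OF _ dpsi]) (use False in simp)
    then have "\<bar>(\<phi> 0 - a0 * 0) - (\<phi> x - a0 * x)\<bar> \<le> integral {x..0} g"
      by (rule has_integral_abs_le[OF _ integrable_integral[OF gab]]) (simp add: g_def)
    then show ?thesis using gI[of x 0] by simp
  qed
  define B where "B = \<bar>\<phi> 0\<bar> + I"
  have psiB: "\<bar>\<phi> x - a0 * x\<bar> \<le> B" for x using psi[of x] unfolding B_def by linarith
  have B0: "0 \<le> B" using I0 unfolding B_def by simp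
  define u where "u = (\<lambda>x. \<phi> x - x * f1 x)"
  define q where "q = (\<lambda>x. (x + \<phi> x * f1 x) / v x)"
  have dq: "(q has_real_derivative v x + k x * u x) (at x)" for x
  proof -
    have "(q has_real_derivative ((1 + (f1 x * f1 x + f2 x * \<phi> x)) * v x - (x + \<phi> x * f1 x) * (f1 x * f2 x / v x)) / (v x * v x)) (at x)"
      unfolding q_def
      by (rule DERIV_divide[OF DERIV_add[OF DERIV_ident DERIV_mult[OF d0 d1]] dv]) (use vpos[of x] in simp)
    moreover have "((1 + (f1 x * f1 x + f2 x * \<phi> x)) * v x - (x + \<phi> x * f1 x) * (f1 x * f2 x / v x)) / (v x * v x)
        = v x + k x * u x"
      unfolding k_def u_def by (rule alg_q[OF vpos hv])
    ultimately show ?thesis by simp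
  qed
  define e where "e = (\<lambda>x. v x - v0 - a0 / v0 * (f1 x - a0))"
  have cs: "1 + a0 * f1 x \<le> v0 * v x" for x
    unfolding v0_def v_def by (rule cs_sqrt)
  have e0: "0 \<le> e x" for x
  proof -
    have "e x * v0 = v0 * v x - (1 + a0 * f1 x)"
      unfolding e_def using v0pos hv0 by (simp add: field_simps power2_eq_square)
    then have "0 \<le> e x * v0" using cs[of x] by simp
    then show ?thesis using v0pos by (simp add: zero_le_mult_iff)
  qed
  define r where "r = (\<lambda>x. q x - v0 * x - a0 / v0 * (\<phi> x - a0 * x))"
  define W where "W = (\<lambda>x. k x * K x + r x / 4)"
  have dW: "(W has_real_derivative v x * (K x)\<^sup>2 + e x / 4) (at x)" for x
  proof -
    have a1: "((\<lambda>x. k x * K x) has_real_derivative kp x * K x + (- (\<phi> x - x * f1 x) / 4) * k x) (at x)"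
      by (rule DERIV_mult[OF dk dK])
    have a3: "((\<lambda>x. a0 / v0 * (\<phi> x - a0 * x)) has_real_derivative a0 / v0 * (f1 x - a0)) (at x)"
      by (rule DERIV_cmult[OF dpsi])
    have a4: "(r has_real_derivative v x + k x * u x - v0 * 1 - a0 / v0 * (f1 x - a0)) (at x)"
      unfolding r_def by (rule DERIV_diff[OF DERIV_diff[OF dq DERIV_cmult[OF DERIV_ident]] a3])
    have "(W has_real_derivative kp x * K x + (- (\<phi> x - x * f1 x) / 4) * k x
        + (v x + k x * u x - v0 * 1 - a0 / v0 * (f1 x - a0)) / 4) (at x)"
      unfolding W_def by (rule DERIV_add[OF a1 DERIV_cdivide[OF a4]])
    moreover have "kp x * K x + (- (\<phi> x - x * f1 x) / 4) * k x
        + (v x + k x * u x - v0 * 1 - a0 / v0 * (f1 x - a0)) / 4 = v x * (K x)\<^sup>2 + e x / 4"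
    proof -
      have "kp x * K x = v x * (K x)\<^sup>2" using vpos[of x] by (simp add: K_def power2_eq_square field_simps)
      then show ?thesis using v0pos by (simp add: e_def u_def field_simps)
    qed
    ultimately show ?thesis by simp
  qed
  have Wmono: "W x \<le> W y" if "x \<le> y" for x y
  proof (rule DERIV_nonneg_imp_nondecreasing[OF that])
    fix z
    have "0 \<le> v z * (K z)\<^sup>2 + e z / 4" using vpos[of z] e0[of z] by simp
    then show "\<exists>d. (W has_real_derivative d) (at z) \<and> 0 \<le> d" using dW[of z] by blast
  qed
  have req: "r x = x * ((1 + a0 * f1 x) / v x - v0) + (\<phi> x - a0 * x) * (f1 x / v x - a0 / v0)" for x
    unfolding r_def q_def using vpos[of x] v0pos by (simp add: field_simps)
  have t1: "(1 + a0 * f1 x) / v x - v0 \<le> 0" for x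
    using cs[of x] vpos[of x] by (simp add: divide_le_eq mult.commute)
  have t2: "(\<phi> x - a0 * x) * (f1 x / v x - a0 / v0) \<le> B * g x" for x
  proof -
    have "\<bar>f1 x / v x - a0 / v0\<bar> \<le> g x" unfolding v_def v0_def g_def by (rule gq_lip)
    then have "\<bar>\<phi> x - a0 * x\<bar> * \<bar>f1 x / v x - a0 / v0\<bar> \<le> B * g x"
      using psiB[of x] by (intro mult_mono) (auto simp: g0)
    then show ?thesis by (metis abs_ge_self abs_mult order_trans)
  qed
  have t2': "- (B * g x) \<le> (\<phi> x - a0 * x) * (f1 x / v x - a0 / v0)" for x
  proof -
    have "\<bar>f1 x / v x - a0 / v0\<bar> \<le> g x" unfolding v_def v0_def g_def by (rule gq_lip)
    then have "\<bar>\<phi> x - a0 * x\<bar> * \<bar>f1 x / v x - a0 / v0\<bar> \<le> B * g x"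
      using psiB[of x] by (intro mult_mono) (auto simp: g0)
    then show ?thesis by (metis abs_le_iff abs_mult minus_le_iff)
  qed
  have rpos: "r x \<le> B * g x" if "0 \<le> x" for x
  proof -
    have "x * ((1 + a0 * f1 x) / v x - v0) \<le> 0" using that t1[of x] by (simp add: mult_nonneg_nonpos)
    then show ?thesis using req[of x] t2[of x] by linarith
  qed
  have rneg: "- (B * g x) \<le> r x" if "x \<le> 0" for x
  proof -
    have "0 \<le> x * ((1 + a0 * f1 x) / v x - v0)" using that t1[of x] by (simp add: mult_nonpos_nonpos)
    then show ?thesis using req[of x] t2'[of x] by linarith
  qed
  have dk2: "((\<lambda>t. (k t)\<^sup>2 / 2) has_real_derivative k t * kp t) (at t)" for t
    using DERIV_cdivide[OF DERIV_power[OF dk, of 2], of 2] by (simp add: algebra_simps)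
  have kkp: "k t * kp t = v t * (k t * K t)" for t
    using vpos[of t] by (simp add: K_def)
  define C where "C = V * B / 4"
  have C0: "0 \<le> C" unfolding C_def using B0 vV[of 0] vpos[of 0] by simp
  have f2k: "1 \<le> \<bar>f2 t\<bar>" if "1 \<le> (k t)\<^sup>2" for t
  proof -
    have "1 \<le> \<bar>k t\<bar>" using that by (metis abs_ge_self abs_le_square_iff abs_one le_trans one_le_power power_one)
    moreover have "1 \<le> v t ^ 3" using v1[of t] by simp
    ultimately have "1 * 1 \<le> \<bar>k t\<bar> * v t ^ 3" by (intro mult_mono) auto
    moreover have "f2 t = k t * v t ^ 3" unfolding k_def using vpos[of t] by simp
    ultimately show ?thesis using vpos[of t] by (simp add: abs_mult)
  qed
  have Wle: "W x0 \<le> 0" for x0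
  proof (rule ccontr)
    assume "\<not> W x0 \<le> 0"
    then have dpos: "0 < W x0" by simp
    define \<delta> where "\<delta> = W x0"
    define x1 where "x1 = max x0 0"
    have low: "\<delta> - C * g t \<le> k t * kp t" if "x1 \<le> t" for t
    proof -
      have "\<delta> \<le> W t" unfolding \<delta>_def by (rule Wmono) (use that in \<open>simp add: x1_def\<close>)
      moreover have "r t \<le> B * g t" by (rule rpos) (use that in \<open>simp add: x1_def\<close>)
      ultimately have kK: "\<delta> - B * g t / 4 \<le> k t * K t" unfolding W_def by simp
      have "v t * (\<delta> - B * g t / 4) \<le> v t * (k t * K t)" using kK vpos[of t] by (simp add: mult_left_mono)
      moreover have "\<delta> \<le> v t * \<delta>" using v1[of t] dpos \<delta>_def by simp
      moreover have "v t * (B * g t) \<le> V * (B * g t)" using vV[of t] B0 g0[of t] by (simp add: mult_right_mono)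
      ultimately show ?thesis unfolding kkp C_def by (simp add: algebra_simps)
    qed
    have grow: "\<delta> * (t - x1) - C * I \<le> (k t)\<^sup>2 / 2" if "x1 \<le> t" for t
    proof -
      have i1: "((\<lambda>t. k t * kp t) has_integral ((k t)\<^sup>2 / 2 - (k x1)\<^sup>2 / 2)) {x1..t}"
        by (rule ftc_real[OF that dk2])
      have i2: "((\<lambda>s. \<delta> - C * g s) has_integral (\<delta> * (t - x1) - C * integral {x1..t} g)) {x1..t}"
        using has_integral_diff[OF has_integral_const_real[of \<delta> x1 t] has_integral_mult_right[OF integrable_integral[OF gab], of C]]
        using that by (simp add: mult.commute)
      have "\<delta> * (t - x1) - C * integral {x1..t} g \<le> (k t)\<^sup>2 / 2 - (k x1)\<^sup>2 / 2"
        by (rule has_integral_le[OF i2 i1]) (use low in auto)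
      moreover have "C * integral {x1..t} g \<le> C * I" using gI C0 by (simp add: mult_left_mono)
      moreover have "0 \<le> (k x1)\<^sup>2" by simp
      ultimately show ?thesis by linarith
    qed
    define a where "a = x1 + (1 / 2 + C * I) / \<delta>"
    have ax1: "x1 \<le> a" unfolding a_def using C0 I0 dpos \<delta>_def by simp
    show False
    proof (rule no_long[OF d1 c2 Lb, of a "a + 2 * L + 1"])
      fix t assume "a \<le> t" "t \<le> a + 2 * L + 1"
      have "1 / 2 + C * I \<le> \<delta> * (t - x1)"
      proof -
        have "(1 / 2 + C * I) / \<delta> \<le> t - x1" using \<open>a \<le> t\<close> unfolding a_def by simp
        moreover have "0 < \<delta>" using dpos \<delta>_def by simp
        ultimately show ?thesis by (simp add: pos_divide_le_eq mult.commute)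
      qed
      then have "1 \<le> (k t)\<^sup>2" using grow[of t] ax1 \<open>a \<le> t\<close> by simp
      then show "1 \<le> \<bar>f2 t\<bar>" by (rule f2k)
    qed (use L0 in auto)
  qed
  have Wge: "0 \<le> W x0" for x0
  proof (rule ccontr)
    assume "\<not> 0 \<le> W x0"
    then have dpos: "0 < - W x0" by simp
    define \<delta> where "\<delta> = - W x0"
    define x1 where "x1 = min x0 0"
    have up: "k t * kp t \<le> - \<delta> + C * g t" if "t \<le> x1" for t
    proof -
      have "W t \<le> - \<delta>" unfolding \<delta>_def using Wmono[of t x0] that by (simp add: x1_def)
      moreover have "- (B * g t) \<le> r t" by (rule rneg) (use that in \<open>simp add: x1_def\<close>)
      ultimately have kK: "k t * K t \<le> - \<delta> + B * g t / 4" unfolding W_def by simp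
      have "v t * (k t * K t) \<le> v t * (- \<delta> + B * g t / 4)" using kK vpos[of t] by (simp add: mult_left_mono)
      moreover have "\<delta> \<le> v t * \<delta>" using v1[of t] dpos \<delta>_def by simp
      moreover have "v t * (B * g t) \<le> V * (B * g t)" using vV[of t] B0 g0[of t] by (simp add: mult_right_mono)
      ultimately show ?thesis unfolding kkp C_def by (simp add: algebra_simps)
    qed
    have grow: "\<delta> * (x1 - t) - C * I \<le> (k t)\<^sup>2 / 2" if "t \<le> x1" for t
    proof -
      have i1: "((\<lambda>t. k t * kp t) has_integral ((k x1)\<^sup>2 / 2 - (k t)\<^sup>2 / 2)) {t..x1}"
        by (rule ftc_real[OF that dk2])
      have i2: "((\<lambda>s. - \<delta> + C * g s) has_integral (- \<delta> * (x1 - t) + C * integral {t..x1} g)) {t..x1}"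
        using has_integral_add[OF has_integral_const_real[of "- \<delta>" t x1] has_integral_mult_right[OF integrable_integral[OF gab], of C]]
        using that by (simp add: mult.commute)
      have "(k x1)\<^sup>2 / 2 - (k t)\<^sup>2 / 2 \<le> - \<delta> * (x1 - t) + C * integral {t..x1} g"
        by (rule has_integral_le[OF i1 i2]) (use up in auto)
      moreover have "C * integral {t..x1} g \<le> C * I" using gI C0 by (simp add: mult_left_mono)
      moreover have "0 \<le> (k x1)\<^sup>2" by simp
      ultimately show ?thesis by linarith
    qed
    define b where "b = x1 - (1 / 2 + C * I) / \<delta>"
    have "0 \<le> (1 / 2 + C * I) / \<delta>"
      by (rule divide_nonneg_pos) (use C0 I0 dpos \<delta>_def in auto)
    then have bx1: "b \<le> x1" unfolding b_def by simp
    show False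
    proof (rule no_long[OF d1 c2 Lb, of "b - 2 * L - 1" b])
      fix t assume "b - 2 * L - 1 \<le> t" "t \<le> b"
      have "1 / 2 + C * I \<le> \<delta> * (x1 - t)"
      proof -
        have "(1 / 2 + C * I) / \<delta> \<le> x1 - t" using \<open>t \<le> b\<close> unfolding b_def by simp
        moreover have "0 < \<delta>" using dpos \<delta>_def by simp
        ultimately show ?thesis by (simp add: pos_divide_le_eq mult.commute)
      qed
      then have "1 \<le> (k t)\<^sup>2" using grow[of t] bx1 \<open>t \<le> b\<close> by simp
      then show "1 \<le> \<bar>f2 t\<bar>" by (rule f2k)
    qed (use L0 in auto)
  qed
  have W0: "W = (\<lambda>_. 0)" using Wle Wge by (simp add: fun_eq_iff order_antisym)
  have K0: "K y = 0" for y
  proof -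
    have "v y * (K y)\<^sup>2 + e y / 4 = 0" using DERIV_unique[OF dW[of y, unfolded W0] DERIV_const] .
    moreover have "0 \<le> v y * (K y)\<^sup>2" using vpos[of y] by simp
    ultimately have "v y * (K y)\<^sup>2 = 0" using e0[of y] by linarith
    then show ?thesis using vpos[of y] by simp
  qed
  have Kz: "K = (\<lambda>_. 0)" using K0 by (simp add: fun_eq_iff)
  have "- (\<phi> x - x * f1 x) / 4 = 0" using DERIV_unique[OF dK[of x, unfolded Kz] DERIV_const] .
  then show ?thesis by simp
qed


theorem corollary3p4:
  fixes \<phi> :: "real \<Rightarrow> real" and a0 :: real
  assumes "C_k 4 \<phi>"
    and "sd_profile \<phi>"
    and "\<exists>L. L\<ge>0 \<and> lipschitz_on L UNIV \<phi>"
    and "integrable lborel (\<lambda>x. deriv \<phi> x - a0)"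
  shows "\<forall>x. \<phi> x = a0 * x"
proof -
  define f1 where "f1 = deriv \<phi>"
  define f2 where "f2 = deriv f1"
  define f3 where "f3 = deriv f2"
  define f4 where "f4 = deriv f3"
  have C: "\<And>j x. j < 4 \<Longrightarrow> ((deriv ^^ j) \<phi> has_real_derivative (deriv ^^ Suc j) \<phi> x) (at x)"
    using assms(1) unfolding C_k_def by blast
  have d0: "\<And>x. (\<phi> has_real_derivative f1 x) (at x)" using C[of 0] by (simp add: f1_def)
  have d1: "\<And>x. (f1 has_real_derivative f2 x) (at x)" using C[of 1] by (simp add: f1_def f2_def)
  have d2: "\<And>x. (f2 has_real_derivative f3 x) (at x)" using C[of 2]
    by (simp add: f1_def f2_def f3_def numeral_2_eq_2)
  have d3: "\<And>x. (f3 has_real_derivative f4 x) (at x)" using C[of 3]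
    by (simp add: f1_def f2_def f3_def f4_def numeral_3_eq_3)
  define v where "v = (\<lambda>y. sqrt (1 + (f1 y)\<^sup>2))"
  have vpos: "\<And>y. v y > 0" unfolding v_def by (simp add: add_pos_nonneg)
  have dv: "\<And>x. (v has_real_derivative f1 x * f2 x / v x) (at x)"
    unfolding v_def by (rule sqrt1_deriv[OF d1])
  define kp where "kp = (\<lambda>y. f3 y / v y ^ 3 - 3 * f1 y * (f2 y)\<^sup>2 / v y ^ 5)"
  define k where "k = (\<lambda>y. f2 y / v y ^ 3)"
  have dk: "(k has_real_derivative kp x) (at x)" for x
  proof -
    have h: "((\<lambda>y. v y ^ 3) has_real_derivative 3 * v x ^ 2 * (f1 x * f2 x / v x)) (at x)"
      using DERIV_power[OF dv, of 3] by (simp add: algebra_simps)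
    have "(k has_real_derivative (f3 x * v x ^ 3 - f2 x * (3 * v x ^ 2 * (f1 x * f2 x / v x))) / (v x ^ 3 * v x ^ 3)) (at x)"
      unfolding k_def by (rule DERIV_divide[OF d2 h]) (use vpos[of x] in simp)
    moreover have "(f3 x * v x ^ 3 - f2 x * (3 * v x ^ 2 * (f1 x * f2 x / v x))) / (v x ^ 3 * v x ^ 3) = kp x"
      unfolding kp_def using vpos[of x] by (simp add: field_simps power2_eq_square eval_nat_numeral)
    ultimately show ?thesis by simp
  qed
  have sdv: "sd_v \<phi> = v" by (simp add: fun_eq_iff sd_v_def v_def f1_def)
  have sdk: "sd_k \<phi> = k" by (simp add: fun_eq_iff sd_k_def k_def sdv f2_def f1_def)
  have dsdk: "deriv (sd_k \<phi>) = kp" using dk by (simp add: sdk fun_eq_iff DERIV_imp_deriv)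
  define K where "K = (\<lambda>y. kp y / v y)"
  have Kdiff: "\<exists>D. (K has_real_derivative D) (at x)" for x
  proof -
    have nz: "v x \<noteq> 0" using vpos[of x] by simp
    have a: "f1 differentiable at x" "f2 differentiable at x" "f3 differentiable at x" "v differentiable at x"
      using d1 d2 d3 dv real_differentiable_def by blast+
    have "K differentiable at x" unfolding K_def kp_def
      using a nz by (intro derivative_intros) auto
    then show ?thesis using real_differentiable_def by blast
  qed
  have dK: "(K has_real_derivative - (\<phi> x - x * f1 x) / 4) (at x)" for x
  proof -
    obtain D where D: "(K has_real_derivative D) (at x)" using Kdiff by blast
    have eqK: "(\<lambda>y. 1 / sd_v \<phi> y * deriv (sd_k \<phi>) y) = K" by (simp add: sdv dsdk K_def fun_eq_iff)
    have "(\<phi> x - x * deriv \<phi> x) / (4 * sd_v \<phi> x) = - (1 / sd_v \<phi> x) * deriv K x"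
      using assms(2) unfolding sd_profile_def eqK by blast
    then have "(\<phi> x - x * f1 x) / (4 * v x) = - (1 / v x) * D"
      using DERIV_imp_deriv[OF D] by (simp add: sdv f1_def)
    then have "(\<phi> x + 4 * D - x * f1 x) * v x = 0" using vpos[of x] by (simp add: field_simps)
    then have "D = - (\<phi> x - x * f1 x) / 4" using vpos[of x] by simp
    with D show ?thesis by simp
  qed
  obtain L where L: "L \<ge> 0" "lipschitz_on L UNIV \<phi>" using assms(3) by blast
  have Lb: "\<bar>f1 x\<bar> \<le> L" for x by (rule lip_deriv_bound[OF L(2) d0])
  have intL: "integrable lborel (\<lambda>x. \<bar>f1 x - a0\<bar>)" using assms(4) by (simp add: f1_def)
  have int: "(\<lambda>x. \<bar>f1 x - a0\<bar>) integrable_on UNIV"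
    using has_integral_integral_lborel[OF intL] by blast
  have u0: "\<phi> x = x * f1 x" for x
    by (rule core[OF d0 d1 d2 dK[unfolded K_def kp_def v_def] Lb int])
  have xf2: "x * f2 x = 0" for x
  proof -
    have "((\<lambda>x. \<phi> x - x * f1 x) has_real_derivative f1 x - (1 * f1 x + f2 x * x)) (at x)"
      by (intro DERIV_diff d0 DERIV_mult DERIV_ident d1)
    moreover have "(\<lambda>x. \<phi> x - x * f1 x) = (\<lambda>x. 0)" using u0 by (simp add: fun_eq_iff)
    ultimately have "((\<lambda>x. 0) has_real_derivative f1 x - (1 * f1 x + f2 x * x)) (at x)" by simp
    from DERIV_unique[OF this DERIV_const] show ?thesis by auto
  qed
  have f1c: "f1 x = f1 0" for x
  proof -
    consider "x = 0" | "0 < x" | "x < 0" by linarith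
    then show ?thesis
    proof cases
      case 2
      have "\<exists>z>0. z < x \<and> f1 x - f1 0 = (x - 0) * f2 z" by (rule MVT2[OF 2]) (use d1 in blast)
      then obtain z where "0 < z" "f1 x - f1 0 = (x - 0) * f2 z" by blast
      with xf2[of z] show ?thesis by simp
    next
      case 3
      have "\<exists>z>x. z < 0 \<and> f1 0 - f1 x = (0 - x) * f2 z" by (rule MVT2[OF 3]) (use d1 in blast)
      then obtain z where "z < 0" "f1 0 - f1 x = (0 - x) * f2 z" by blast
      with xf2[of z] show ?thesis by simp
    qed simp
  qed
  have fe: "(\<lambda>x. deriv \<phi> x - a0) = (\<lambda>x. f1 0 - a0)"
    unfolding f1_def[symmetric] using f1c by (metis)
  have "integrable lborel (\<lambda>x::real. f1 0 - a0)" using assms(4) unfolding fe .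
  then have "f1 0 - a0 = 0"
    apply (simp add: integrable_iff_bounded)
    apply (simp add: ennreal_mult_less_top)
    done
  then have c: "f1 0 = a0" by simp
  show ?thesis
  proof
    fix x
    have "f1 x = a0" using f1c[of x] c by simp
    then show "\<phi> x = a0 * x" using u0[of x] by simp
  qed
qed

end
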